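(* Let $(S,\gamma)$ be a $C^\infty$ surface with boundary in $\mathbf{R}^3$, and suppose the boundary $\gamma$ is of finite type $(1,1+s,1+s+r)$ at $t=t_0$ (for positive integers $r,s$). Then $\gamma(t_0)$ is an osculating-tangent point if and only if $\kappa_2^{(s-1)}(t_0)=0$.
   Context: $S\subset\mathbf{R}^3$ is a co-oriented immersed $C^\infty$ surface with boundary curve $\gamma$, parametrised by arc length $t$; $f^{(j)}$ denotes the $j$-th derivative in $t$. Adapted frame: $\boldsymbol e_1=\gamma'$, $\boldsymbol e_3=\boldsymbol n$ the unit normal of $S$, $\boldsymbol e_2=\boldsymbol e_3\times\boldsymbol e_1$; $\kappa_1,\kappa_2,\kappa_3$ are defined by $\boldsymbol e_1'=\kappa_1\boldsymbol e_2+\kappa_2\boldsymbol e_3$, $\boldsymbol e_2'=-\kappa_1\boldsymbol e_1+\kappa_3\boldsymbol e_3$, $\boldsymbol e_3'=-\kappa_2\boldsymbol e_1-\kappa_3\boldsymbol e_2$. The curve $\gamma$ is of finite type at $t_0$ if $A_m(t_0)=(\gamma'(t_0),\dots,\gamma^{(m)}(t_0))$ has rank $3$ for some $m$; its type is $(a_1,a_2,a_3)$ with $a_i=\min\{m:\mathrm{rank}A_m(t_0)=i\}$. The osculating plane at $t_0$ is the plane through $\gamma(t_0)$ spanned by $\gamma^{(a_1)}(t_0)$ and $\gamma^{(a_2)}(t_0)$. $\gamma(t_0)$ is an osculating-tangent point if this osculating plane equals $T_{\gamma(t_0)}S$. *)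

theory Defs
  imports "HOL-Analysis.Analysis" "HOL-Analysis.Cross3"
begin

fun vderiv :: "nat \<Rightarrow> (real \<Rightarrow> 'a::real_normed_vector) \<Rightarrow> real \<Rightarrow> 'a" where
  "vderiv 0 f = f"
| "vderiv (Suc k) f = (\<lambda>t. vector_derivative (vderiv k f) (at t))"

definition smooth_on :: "real set \<Rightarrow> (real \<Rightarrow> 'a::real_normed_vector) \<Rightarrow> bool" where
  "smooth_on I f \<longleftrightarrow> (\<forall>k. \<forall>t\<in>I. vderiv k f differentiable (at t))"

definition rankA :: "(real \<Rightarrow> real^3) \<Rightarrow> nat \<Rightarrow> real \<Rightarrow> nat" where
  "rankA \<gamma> m t0 = dim {vderiv k \<gamma> t0 | k. 1 \<le> k \<and> k \<le> m}"

definition finite_type_at :: "(real \<Rightarrow> real^3) \<Rightarrow> real \<Rightarrow> bool" where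
  "finite_type_at \<gamma> t0 \<longleftrightarrow> (\<exists>m. rankA \<gamma> m t0 = 3)"

definition curve_type :: "(real \<Rightarrow> real^3) \<Rightarrow> real \<Rightarrow> nat \<times> nat \<times> nat" where
  "curve_type \<gamma> t0 =
     ((LEAST m. rankA \<gamma> m t0 = 1), (LEAST m. rankA \<gamma> m t0 = 2), (LEAST m. rankA \<gamma> m t0 = 3))"

definition osculating_plane :: "(real \<Rightarrow> real^3) \<Rightarrow> real \<Rightarrow> (real^3) set" where
  "osculating_plane \<gamma> t0 =
     (let (a1, a2, a3) = curve_type \<gamma> t0 in
      {\<gamma> t0 + a *\<^sub>R vderiv a1 \<gamma> t0 + b *\<^sub>R vderiv a2 \<gamma> t0 | a b. True})"

definition frame_e1 :: "(real \<Rightarrow> real^3) \<Rightarrow> real \<Rightarrow> real^3" where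
  "frame_e1 \<gamma> = vderiv 1 \<gamma>"

definition frame_e3 :: "(real \<Rightarrow> real^3) \<Rightarrow> real \<Rightarrow> real^3" where
  "frame_e3 n = n"

definition frame_e2 :: "(real \<Rightarrow> real^3) \<Rightarrow> (real \<Rightarrow> real^3) \<Rightarrow> real \<Rightarrow> real^3" where
  "frame_e2 \<gamma> n t = cross3 (frame_e3 n t) (frame_e1 \<gamma> t)"

text \<open>kappa_2 is the e3-coefficient of e1' = kappa1 e2 + kappa2 e3 (orthonormal frame).\<close>
definition kappa2 :: "(real \<Rightarrow> real^3) \<Rightarrow> (real \<Rightarrow> real^3) \<Rightarrow> real \<Rightarrow> real" where
  "kappa2 \<gamma> n t = vector_derivative (frame_e1 \<gamma>) (at t) \<bullet> frame_e3 n t"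

definition tangent_plane_at :: "(real \<Rightarrow> real^3) \<Rightarrow> (real \<Rightarrow> real^3) \<Rightarrow> real \<Rightarrow> (real^3) set" where
  "tangent_plane_at \<gamma> n t0 = {\<gamma> t0 + w | w. w \<bullet> n t0 = 0}"

definition osculating_tangent_point :: "(real \<Rightarrow> real^3) \<Rightarrow> (real \<Rightarrow> real^3) \<Rightarrow> real \<Rightarrow> bool" where
  "osculating_tangent_point \<gamma> n t0 \<longleftrightarrow> osculating_plane \<gamma> t0 = tangent_plane_at \<gamma> n t0"

end

theory Submission imports Defs begin

lemma has_vd_inner:
  fixes f g :: "real \<Rightarrow> 'a::real_inner"
  assumes "(f has_vector_derivative a) (at t)" "(g has_vector_derivative b) (at t)"
  shows "((\<lambda>t. f t \<bullet> g t) has_vector_derivative (a \<bullet> g t + f t \<bullet> b)) (at t)"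
proof -
  have "((\<lambda>t. f t \<bullet> g t) has_derivative (\<lambda>h. f t \<bullet> (h *\<^sub>R b) + (h *\<^sub>R a) \<bullet> g t)) (at t)"
    using assms unfolding has_vector_derivative_def by (intro has_derivative_inner) auto
  then show ?thesis unfolding has_vector_derivative_def
    by (rule has_derivative_eq_rhs) (auto simp: algebra_simps fun_eq_iff)
qed

lemma vderiv_shift: "vderiv k (vderiv 1 f) = vderiv (Suc k) f"
  by (induction k) auto

lemma vderiv_add: "vderiv k (vderiv m f) = vderiv (k + m) f"
  by (induction k) auto

lemma smooth_has_vd:
  assumes "smooth_on I f" "t \<in> I"
  shows "(vderiv k f has_vector_derivative vderiv (Suc k) f t) (at t)"
  using assms unfolding smooth_on_def
  by (auto simp: vector_derivative_works)

lemma smooth_shift: "smooth_on I f \<Longrightarrow> smooth_on I (vderiv m f)"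
  unfolding smooth_on_def vderiv_add by auto

lemma pascal_sum:
  fixes a :: "nat \<Rightarrow> nat \<Rightarrow> real"
  shows "(\<Sum>i\<le>m. real (m choose i) * (a (Suc i) (m-i) + a i (Suc (m-i))))
       = (\<Sum>i\<le>Suc m. real (Suc m choose i) * a i (Suc m - i))"
proof -
  have r: "(\<Sum>i\<le>Suc m. real (Suc m choose i) * a i (Suc m - i))
     = a 0 (Suc m) + (\<Sum>i\<le>m. (real (m choose i) + real (m choose Suc i)) * a (Suc i) (m - i))"
    by (subst sum.atMost_Suc_shift) simp
  have s: "(\<Sum>i\<le>Suc m. real (m choose i) * a i (Suc m - i))
     = a 0 (Suc m) + (\<Sum>i\<le>m. real (m choose Suc i) * a (Suc i) (m - i))"
    by (subst sum.atMost_Suc_shift) simp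
  have s2: "(\<Sum>i\<le>Suc m. real (m choose i) * a i (Suc m - i))
     = (\<Sum>i\<le>m. real (m choose i) * a i (Suc (m - i)))"
    by (simp add: Suc_diff_le)
  show ?thesis using r s s2
    by (simp add: distrib_left distrib_right sum.distrib)
qed

lemma leibniz_inner:
  fixes f g :: "real \<Rightarrow> 'a::real_inner"
  assumes "open I" "smooth_on I f" "smooth_on I g"
  shows "t \<in> I \<Longrightarrow> vderiv m (\<lambda>t. f t \<bullet> g t) t
     = (\<Sum>i\<le>m. real (m choose i) * (vderiv i f t \<bullet> vderiv (m-i) g t))"
proof (induction m arbitrary: t)
  case 0 then show ?case by simp
next
  case (Suc m)
  let ?S = "\<lambda>t. (\<Sum>i\<le>m. real (m choose i) * (vderiv i f t \<bullet> vderiv (m-i) g t))"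
  have "(?S has_vector_derivative
      (\<Sum>i\<le>m. real (m choose i) * (vderiv (Suc i) f t \<bullet> vderiv (m-i) g t + vderiv i f t \<bullet> vderiv (Suc (m-i)) g t))) (at t)"
    apply (intro has_vector_derivative_sum)
    apply (rule has_vector_derivative_eq_rhs)
     apply (rule has_vector_derivative_mult_right)
     apply (rule has_vd_inner)
      apply (rule smooth_has_vd[OF assms(2) Suc.prems])
     apply (rule smooth_has_vd[OF assms(3) Suc.prems])
    by simp
  then have "(vderiv m (\<lambda>t. f t \<bullet> g t) has_vector_derivative
      (\<Sum>i\<le>m. real (m choose i) * (vderiv (Suc i) f t \<bullet> vderiv (m-i) g t + vderiv i f t \<bullet> vderiv (Suc (m-i)) g t))) (at t)"
    by (rule has_vector_derivative_transform_within_open[OF _ assms(1) Suc.prems]) (simp add: Suc.IH)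
  then have "vderiv (Suc m) (\<lambda>t. f t \<bullet> g t) t =
      (\<Sum>i\<le>m. real (m choose i) * (vderiv (Suc i) f t \<bullet> vderiv (m-i) g t + vderiv i f t \<bullet> vderiv (Suc (m-i)) g t))"
    by (simp add: vector_derivative_at)
  also have "\<dots> = (\<Sum>i\<le>Suc m. real (Suc m choose i) * (vderiv i f t \<bullet> vderiv (Suc m - i) g t))"
    by (rule pascal_sum[where a="\<lambda>i j. vderiv i f t \<bullet> vderiv j g t"])
  finally show ?case .
qed


lemma vd_const:
  fixes f :: "real \<Rightarrow> 'a::real_normed_vector"
  assumes "open I" "t \<in> I" "\<forall>t\<in>I. f t = c"
  shows "vector_derivative f (at t) = 0"
proof -
  have "((\<lambda>_. c) has_vector_derivative 0) (at t)" by simp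
  then have "(f has_vector_derivative 0) (at t)"
    by (rule has_vector_derivative_transform_within_open[OF _ assms(1,2)]) (use assms in auto)
  then show ?thesis by (simp add: vector_derivative_at)
qed

lemma vderiv_const:
  fixes f :: "real \<Rightarrow> 'a::real_normed_vector"
  assumes "open I" "\<forall>t\<in>I. f t = c"
  shows "t \<in> I \<Longrightarrow> vderiv (Suc j) f t = 0"
proof (induction j arbitrary: t)
  case 0 then show ?case using vd_const[OF assms(1) 0 assms(2)] by simp
next
  case (Suc j)
  show ?case using vd_const[OF assms(1) Suc.prems, of "vderiv (Suc j) f" 0] Suc.IH by simp
qed

lemma rank_mono: "m \<le> m' \<Longrightarrow> rankA \<gamma> m t0 \<le> rankA \<gamma> m' t0"
  unfolding rankA_def by (rule dim_subset) auto

lemma A_Suc: "{vderiv k \<gamma> t0 | k. 1 \<le> k \<and> k \<le> Suc m} = insert (vderiv (Suc m) \<gamma> t0) {vderiv k \<gamma> t0 | k. 1 \<le> k \<and> k \<le> m}"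
  by (auto simp: le_Suc_eq simp del: vderiv.simps)

lemma rank_Suc: "rankA \<gamma> (Suc m) t0 \<le> rankA \<gamma> m t0 + 1"
  unfolding rankA_def A_Suc dim_insert by auto

lemma rank_0: "rankA \<gamma> 0 t0 = 0"
  unfolding rankA_def by simp

lemma rank_ivt: "rankA \<gamma> m t0 \<ge> 2 \<Longrightarrow> \<exists>j\<le>m. rankA \<gamma> j t0 = 2"
proof (induction m)
  case 0 then show ?case by (simp add: rank_0)
next
  case (Suc m)
  show ?case
  proof (cases "rankA \<gamma> m t0 \<ge> 2")
    case True then show ?thesis using Suc.IH le_SucI by blast
  next
    case False
    then have "rankA \<gamma> (Suc m) t0 = 2" using rank_Suc[of \<gamma> m t0] Suc.prems by linarith
    then show ?thesis by blast
  qed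
qed

theorem theorem3p2:
  fixes \<gamma> n :: "real \<Rightarrow> real^3" and I :: "real set" and t0 :: real and r s :: nat
  assumes "open I" and "t0 \<in> I"
    and "smooth_on I \<gamma>" and "smooth_on I n"
    and "\<forall>t\<in>I. norm (vderiv 1 \<gamma> t) = 1"
    and "\<forall>t\<in>I. norm (n t) = 1"
    and "\<forall>t\<in>I. n t \<bullet> vderiv 1 \<gamma> t = 0"
    and "r > 0" and "s > 0"
    and "finite_type_at \<gamma> t0"
    and "curve_type \<gamma> t0 = (1, 1 + s, 1 + s + r)"
  shows "osculating_tangent_point \<gamma> n t0 \<longleftrightarrow> vderiv (s - 1) (kappa2 \<gamma> n) t0 = 0"
proof -
  define u where "u = vderiv 1 \<gamma> t0"
  define v where "v = vderiv (Suc s) \<gamma> t0"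
  define N where "N = n t0"
  define A where "A = (\<lambda>m. {vderiv k \<gamma> t0 | k. 1 \<le> k \<and> k \<le> m})"
  have rk: "rankA \<gamma> m t0 = dim (A m)" for m unfolding rankA_def A_def ..
  have u0: "u \<noteq> 0" using assms(5,2) unfolding u_def by auto
  have uN: "u \<bullet> N = 0" using assms(7,2) unfolding u_def N_def by (simp add: inner_commute)
  have N0: "N \<noteq> 0" using assms(6,2) unfolding N_def by auto
  have least2: "(LEAST m. rankA \<gamma> m t0 = 2) = 1 + s"
    using assms(11) unfolding curve_type_def by simp
  obtain m3 where "rankA \<gamma> m3 t0 = 3" using assms(10) unfolding finite_type_at_def by auto
  then obtain j where "rankA \<gamma> j t0 = 2" using rank_ivt[of \<gamma> m3 t0] by auto
  then have r2: "rankA \<gamma> (1+s) t0 = 2" using LeastI[of "\<lambda>m. rankA \<gamma> m t0 = 2"] least2 by simp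
  have "rankA \<gamma> s t0 \<noteq> 2" using not_less_Least[of s "\<lambda>m. rankA \<gamma> m t0 = 2"] least2 by simp
  moreover have "rankA \<gamma> s t0 \<le> 2" using rank_mono[of s "1+s" \<gamma> t0] r2 by simp
  ultimately have rs: "dim (A s) \<le> 1" using rk by simp
  have du: "dim {u} = 1" using u0 by (simp add: dim_insert)
  have uA: "u \<in> A s" using assms(9) unfolding A_def u_def by (auto simp del: vderiv.simps)
  have Aspan: "x \<in> span {u}" if "x \<in> A s" for x
  proof (rule ccontr)
    assume "x \<notin> span {u}"
    then have "dim (insert x {u}) = 2" using du by (simp add: dim_insert)
    moreover have "dim (insert x {u}) \<le> dim (A s)" using that uA by (intro dim_subset) auto
    ultimately show False using rs by simp
  qed
  have vu: "v \<notin> span {u}"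
  proof
    assume "v \<in> span {u}"
    then have "A (Suc s) \<subseteq> span {u}" using Aspan unfolding A_def v_def by (auto simp: le_Suc_eq)
    then have "dim (A (Suc s)) \<le> dim (span {u})" by (rule dim_subset)
    then show False using r2 rk du by simp
  qed
  have "dim (insert v {u}) = 2" using vu du by (subst dim_insert) simp
  then have duv: "dim {u, v} = 2" by (simp add: insert_commute)
  have inspan: "\<exists>c. vderiv k \<gamma> t0 = c *\<^sub>R u" if "1 \<le> k" "k \<le> s" for k
  proof -
    have "vderiv k \<gamma> t0 \<in> span {u}" using Aspan that unfolding A_def by auto
    then show ?thesis by (auto simp: span_singleton)
  qed
  have sm1: "smooth_on I (vderiv 1 \<gamma>)" by (rule smooth_shift[OF assms(3)])
  have hconst: "\<forall>t\<in>I. vderiv 1 \<gamma> t \<bullet> vderiv 1 \<gamma> t = 1"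
    using assms(5) by (simp add: inner_commute norm_eq_1)
  have zero: "2 \<le> k \<Longrightarrow> k \<le> s \<Longrightarrow> vderiv k \<gamma> t0 = 0" for k
  proof (induction k rule: less_induct)
    case (less k)
    define m where "m = k - 1"
    have m1: "1 \<le> m" and km: "k = Suc m" using less.prems unfolding m_def by auto
    have "0 = vderiv m (\<lambda>t. vderiv 1 \<gamma> t \<bullet> vderiv 1 \<gamma> t) t0"
      using vderiv_const[OF assms(1) hconst assms(2), of "m - 1"] m1 by simp
    also have "\<dots> = (\<Sum>i\<le>m. real (m choose i) * (vderiv (Suc i) \<gamma> t0 \<bullet> vderiv (Suc (m-i)) \<gamma> t0))"
      using leibniz_inner[OF assms(1) sm1 sm1 assms(2)] by (simp only: vderiv_shift)
    also have "\<dots> = (\<Sum>i\<in>{0,m}. real (m choose i) * (vderiv (Suc i) \<gamma> t0 \<bullet> vderiv (Suc (m-i)) \<gamma> t0))"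
    proof (rule sum.mono_neutral_right)
      show "\<forall>i\<in>{..m} - {0, m}. real (m choose i) * (vderiv (Suc i) \<gamma> t0 \<bullet> vderiv (Suc (m - i)) \<gamma> t0) = 0"
      proof
        fix i assume "i \<in> {..m} - {0, m}"
        then have "vderiv (Suc i) \<gamma> t0 = 0" using less.IH[of "Suc i"] km less.prems by auto
        then show "real (m choose i) * (vderiv (Suc i) \<gamma> t0 \<bullet> vderiv (Suc (m - i)) \<gamma> t0) = 0" by simp
      qed
    qed auto
    also have "\<dots> = 2 * (u \<bullet> vderiv k \<gamma> t0)"
      using m1 km unfolding u_def by (simp add: inner_commute)
    finally have "u \<bullet> vderiv k \<gamma> t0 = 0" by simp
    moreover obtain c where c: "vderiv k \<gamma> t0 = c *\<^sub>R u" using inspan less.prems by fastforce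
    ultimately have "c * (u \<bullet> u) = 0" by simp
    then have "c = 0" using u0 by simp
    then show ?case using c by simp
  qed
  have k2: "kappa2 \<gamma> n = (\<lambda>t. vderiv 2 \<gamma> t \<bullet> n t)"
    unfolding kappa2_def frame_e1_def frame_e3_def by (simp add: numeral_2_eq_2)
  have sm2: "smooth_on I (vderiv 2 \<gamma>)" by (rule smooth_shift[OF assms(3)])
  have "vderiv (s - 1) (kappa2 \<gamma> n) t0 = (\<Sum>i\<le>s-1. real ((s-1) choose i) * (vderiv (i+2) \<gamma> t0 \<bullet> vderiv (s-1-i) n t0))"
    unfolding k2 using leibniz_inner[OF assms(1) sm2 assms(4) assms(2)] by (simp add: vderiv_add)
  also have "\<dots> = (\<Sum>i\<in>{s-1}. real ((s-1) choose i) * (vderiv (i+2) \<gamma> t0 \<bullet> vderiv (s-1-i) n t0))"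
  proof (rule sum.mono_neutral_right)
    show "\<forall>i\<in>{..s-1} - {s-1}. real ((s-1) choose i) * (vderiv (i+2) \<gamma> t0 \<bullet> vderiv (s-1-i) n t0) = 0"
    proof
      fix i assume "i \<in> {..s-1} - {s-1}"
      then have "vderiv (i+2) \<gamma> t0 = 0" using zero[of "i+2"] by auto
      then show "real ((s-1) choose i) * (vderiv (i+2) \<gamma> t0 \<bullet> vderiv (s-1-i) n t0) = 0" by simp
    qed
  qed auto
  also have "\<dots> = v \<bullet> N" using assms(9) unfolding v_def N_def by simp
  finally have kv: "vderiv (s - 1) (kappa2 \<gamma> n) t0 = v \<bullet> N" .
  have osc: "osculating_plane \<gamma> t0 = {\<gamma> t0 + a *\<^sub>R u + b *\<^sub>R v | a b. True}"
    unfolding osculating_plane_def assms(11) u_def v_def by simp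
  have tan: "tangent_plane_at \<gamma> n t0 = {\<gamma> t0 + w | w. w \<bullet> N = 0}"
    unfolding tangent_plane_at_def N_def ..
  have hyp: "{x. N \<bullet> x = 0} = span {u, v}" if "v \<bullet> N = 0"
  proof -
    have "span {u, v} = {x. N \<bullet> x = 0}"
    proof (rule subspace_dim_equal)
      show "subspace (span {u, v})" by simp
      show "subspace {x. N \<bullet> x = 0}" by (rule subspace_hyperplane)
      show "span {u, v} \<subseteq> {x. N \<bullet> x = 0}"
        by (rule span_minimal) (use that uN subspace_hyperplane[of N] in \<open>auto simp: inner_commute\<close>)
      show "dim {x. N \<bullet> x = 0} \<le> dim (span {u, v})"
        using dim_hyperplane[OF N0] duv by simp
    qed
    then show ?thesis by simp
  qed
  show ?thesis
    unfolding osculating_tangent_point_def osc tan kv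
  proof
    assume eq: "{\<gamma> t0 + a *\<^sub>R u + b *\<^sub>R v | a b. True} = {\<gamma> t0 + w | w. w \<bullet> N = 0}"
    have "\<gamma> t0 + v \<in> {\<gamma> t0 + a *\<^sub>R u + b *\<^sub>R v | a b. True}"
      by (rule CollectI, rule exI[of _ 0], rule exI[of _ 1]) simp
    then have "\<gamma> t0 + v \<in> {\<gamma> t0 + w | w. w \<bullet> N = 0}" unfolding eq .
    then obtain w where "\<gamma> t0 + v = \<gamma> t0 + w" "w \<bullet> N = 0" by blast
    then show "v \<bullet> N = 0" by simp
  next
    assume vN: "v \<bullet> N = 0"
    show "{\<gamma> t0 + a *\<^sub>R u + b *\<^sub>R v | a b. True} = {\<gamma> t0 + w | w. w \<bullet> N = 0}"
    proof (intro set_eqI iffI)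
      fix x assume "x \<in> {\<gamma> t0 + a *\<^sub>R u + b *\<^sub>R v | a b. True}"
      then obtain a b where "x = \<gamma> t0 + (a *\<^sub>R u + b *\<^sub>R v)" by (auto simp: add.assoc)
      moreover have "(a *\<^sub>R u + b *\<^sub>R v) \<bullet> N = 0" using uN vN by (simp add: inner_add_left)
      ultimately show "x \<in> {\<gamma> t0 + w | w. w \<bullet> N = 0}" by blast
    next
      fix x assume "x \<in> {\<gamma> t0 + w | w. w \<bullet> N = 0}"
      then obtain w where x: "x = \<gamma> t0 + w" and w: "w \<bullet> N = 0" by auto
      have "w \<in> span {u, v}" using hyp[OF vN] w by (auto simp: inner_commute)
      then obtain a b where "w = a *\<^sub>R u + b *\<^sub>R v"
        by (auto simp: span_insert span_singleton algebra_simps)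
      then show "x \<in> {\<gamma> t0 + a *\<^sub>R u + b *\<^sub>R v | a b. True}" using x by (auto simp: add.assoc)
    qed
  qed
qed

end
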